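(* Let $p$ be a prime and let $H(X)=\prod_{j=0}^{p-1}G_p(X-j)$ (which equals $\prod_{i=0}^{p^2-1}(X-i)$). Then for each $k\in\{0,\dots,p-1\}$, $$H(X)\equiv -G_p(X-k)\pmod{(p,X-k)^{p+1}}.$$
   Context: $G_p(X)=\prod_{h=0}^{p-1}(X-hp)$. *)

theory Defs
  imports "HOL-Computational_Algebra.Polynomial"
begin

definition G :: "nat \<Rightarrow> int poly" where
  "G p = (\<Prod>h<p. [:- (int h * int p), 1:])"

text \<open>Membership in the ideal (c, X - k)^n of Z[X]: the n-th power of the ideal
  generated by c and X - k is generated by the products c^i (X-k)^(n-i), i = 0..n.\<close>
definition in_ideal_pow :: "int poly \<Rightarrow> int \<Rightarrow> int \<Rightarrow> nat \<Rightarrow> bool" where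
  "in_ideal_pow f c k n \<longleftrightarrow>
     (\<exists>g :: nat \<Rightarrow> int poly. f = (\<Sum>i\<le>n. smult (c ^ i) ([:- k, 1:] ^ (n - i)) * g i))"

end

theory Submission
  imports Defs "HOL-Number_Theory.Number_Theory"
begin

lemma smult_sum_right: "Polynomial.smult c (sum f A) = (\<Sum>i\<in>A. Polynomial.smult c (f i))"
  by (induction A rule: infinite_finite_induct) (simp_all add: Polynomial.smult_add_right)

lemma iip_zero: "in_ideal_pow f c k 0"
  unfolding in_ideal_pow_def by (rule exI[of _ "\<lambda>_. f"]) simp

lemma iip_mult: "in_ideal_pow a c k n \<Longrightarrow> in_ideal_pow (a * q) c k n"
proof -
  assume "in_ideal_pow a c k n"
  then obtain g where g: "a = (\<Sum>i\<le>n. Polynomial.smult (c ^ i) ([:- k, 1:] ^ (n - i)) * g i)"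
    unfolding in_ideal_pow_def by blast
  show ?thesis unfolding in_ideal_pow_def
    by (rule exI[of _ "\<lambda>i. g i * q"]) (simp add: g sum_distrib_right mult.assoc)
qed

lemma suc_aux:
  fixes Y :: "'a::comm_ring_1 poly"
  shows "Y * (\<Sum>i\<le>n. Polynomial.smult (c ^ i) (Y ^ (n - i)) * ga i)
          + Polynomial.smult c (\<Sum>i\<le>n. Polynomial.smult (c ^ i) (Y ^ (n - i)) * gb i)
       = (\<Sum>i\<le>Suc n. Polynomial.smult (c ^ i) (Y ^ (Suc n - i)) *
            ((if i \<le> n then ga i else 0) + (if i = 0 then 0 else gb (i - 1))))"
proof -
  define A where "A i = (if i \<le> n then ga i else 0)" for i
  define B where "B i = (if i = 0 then 0 else gb (i - 1))" for i
  have 1: "Y * (\<Sum>i\<le>n. Polynomial.smult (c ^ i) (Y ^ (n - i)) * ga i)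
      = (\<Sum>i\<le>Suc n. Polynomial.smult (c ^ i) (Y ^ (Suc n - i)) * A i)"
    unfolding sum_distrib_left
    by (simp add: A_def Suc_diff_le mult_ac)
  have 2: "Polynomial.smult c (\<Sum>i\<le>n. Polynomial.smult (c ^ i) (Y ^ (n - i)) * gb i)
     = (\<Sum>i\<le>Suc n. Polynomial.smult (c ^ i) (Y ^ (Suc n - i)) * B i)"
    unfolding smult_sum_right sum.atMost_Suc_shift
    by (simp add: B_def mult_ac)
  show ?thesis unfolding 1 2 A_def[symmetric] B_def[symmetric]
    by (simp add: distrib_left sum.distrib)
qed

lemma iip_suc:
  assumes "in_ideal_pow a c k n" "in_ideal_pow b c k n"
  shows "in_ideal_pow ([:- k, 1:] * a + Polynomial.smult c b) c k (Suc n)"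
proof -
  obtain ga where ga: "a = (\<Sum>i\<le>n. Polynomial.smult (c ^ i) ([:- k, 1:] ^ (n - i)) * ga i)"
    using assms(1) unfolding in_ideal_pow_def by blast
  obtain gb where gb: "b = (\<Sum>i\<le>n. Polynomial.smult (c ^ i) ([:- k, 1:] ^ (n - i)) * gb i)"
    using assms(2) unfolding in_ideal_pow_def by blast
  show ?thesis unfolding in_ideal_pow_def
    by (rule exI, unfold ga gb, rule suc_aux)
qed

lemma iip_prod:
  "in_ideal_pow (\<Prod>h<m. [:- k, 1:] + Polynomial.smult c [:- int h:]) c k m"
proof (induction m)
  case 0 then show ?case by (rule iip_zero)
next
  case (Suc m)
  let ?P = "\<Prod>h<m. [:- k, 1:] + Polynomial.smult c [:- int h:]"
  have "(\<Prod>h<Suc m. [:- k, 1:] + Polynomial.smult c [:- int h:]) =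
        ?P * ([:- k, 1:] + Polynomial.smult c [:- int m:])"
    by (simp only: prod.lessThan_Suc)
  also have "\<dots> = [:- k, 1:] * ?P + Polynomial.smult c (?P * [:- int m:])"
    by (simp only: mult.commute[of ?P] distrib_right Polynomial.mult_smult_left)
  finally have eq: "(\<Prod>h<Suc m. [:- k, 1:] + Polynomial.smult c [:- int h:]) =
        [:- k, 1:] * ?P + Polynomial.smult c (?P * [:- int m:])" .
  show ?case unfolding eq by (rule iip_suc[OF Suc iip_mult[OF Suc]])
qed

lemma neg_one_pow_cong:
  assumes "prime (p::nat)"
  shows "[(-1::int) ^ p = -1] (mod int p)"
proof (cases "p = 2")
  case True then show ?thesis by (simp add: cong_def)
next
  case False
  then have "p > 2" using prime_ge_2_nat[OF assms] by linarith
  then have "odd p" using assms prime_odd_nat by blast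
  then show ?thesis by simp
qed

lemma wilson_part:
  assumes "prime (p::nat)" "k < p"
  shows "[(\<Prod>j\<in>{..<p} - {k}. int k - int j) = -1] (mod int p)"
proof -
  define S where "S = {..<p} - {k}"
  define f where "f j = (if j \<le> k then k - j else k + p - j)" for j
  have inj: "inj_on f S" unfolding inj_on_def S_def f_def by auto
  have sub: "f ` S \<subseteq> {1..p-1}"
  proof
    fix y assume "y \<in> f ` S"
    then obtain j where j: "j < p" "j \<noteq> k" "y = f j" unfolding S_def by auto
    then show "y \<in> {1..p-1}" using assms(2) unfolding f_def by (cases "j \<le> k") auto
  qed
  have cS: "card S = p - 1" unfolding S_def using assms(2) by simp
  have img: "f ` S = {1..p-1}"
  proof (rule card_subset_eq)
    show "finite {1..p-1}" by simp
    show "f ` S \<subseteq> {1..p-1}" by (rule sub)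
    show "card (f ` S) = card {1..p-1}" using card_image[OF inj] cS by simp
  qed
  have "[(\<Prod>j\<in>S. int k - int j) = (\<Prod>j\<in>S. int (f j))] (mod int p)"
  proof (rule cong_prod)
    fix j assume "j \<in> S"
    then have "j < p" unfolding S_def by auto
    show "[int k - int j = int (f j)] (mod int p)"
    proof (cases "j \<le> k")
      case True then show ?thesis by (simp add: f_def of_nat_diff)
    next
      case False
      then have "int (f j) = (int k - int j) + int p * 1" using \<open>j < p\<close> by (simp add: f_def)
      then show ?thesis by (simp add: cong_def)
    qed
  qed
  also have "(\<Prod>j\<in>S. int (f j)) = (\<Prod>i\<in>f ` S. int i)"
    by (simp add: prod.reindex[OF inj])
  also have "\<dots> = fact (p - 1)" by (simp add: img fact_prod)
  also have "[\<dots> = -1] (mod int p)" by (rule wilson_theorem[OF assms(1)])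
  finally show ?thesis unfolding S_def .
qed

lemma poly_G: "poly (G p) x = (\<Prod>h<p. x - int h * int p)"
  by (simp add: G_def poly_prod)

theorem mainTheorem17:
  fixes p k :: nat
  assumes "prime p" and "k < p"
  shows "in_ideal_pow
           ((\<Prod>j<p. pcompose (G p) [:- int j, 1:]) - (- pcompose (G p) [:- int k, 1:]))
           (int p) (int k) (p + 1)"
proof -
  define F where "F j = pcompose (G p) [:- int j, 1:]" for j
  define S where "S = {..<p} - {k}"
  define Q where "Q = (\<Prod>j\<in>S. F j)"
  let ?Y = "[:- int k, 1:]"
  have Fk: "F k = (\<Prod>h<p. ?Y + Polynomial.smult (int p) [:- int h:])"
    unfolding F_def G_def pcompose_prod
    by (intro prod.cong refl) (simp add: pcompose_pCons algebra_simps)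
  have FkI: "in_ideal_pow (F k) (int p) (int k) p"
    unfolding Fk by (rule iip_prod)
  have split: "(\<Prod>j<p. F j) = F k * Q"
    unfolding Q_def S_def using assms(2) by (simp add: prod.remove)
  have pQ: "poly Q (int k) = (\<Prod>j\<in>S. \<Prod>h<p. int k - int j - int h * int p)"
    unfolding Q_def F_def by (simp add: poly_prod poly_pcompose poly_G)
  have "[poly Q (int k) = (\<Prod>j\<in>S. (int k - int j) ^ p)] (mod int p)"
    unfolding pQ
  proof (rule cong_prod)
    fix j assume "j \<in> S"
    have "[(\<Prod>h<p. int k - int j - int h * int p) = (\<Prod>h<p. int k - int j)] (mod int p)"
    proof (rule cong_prod)
      fix h
      have "int k - int j - int h * int p = (int k - int j) + int p * (- int h)" by simp
      then show "[int k - int j - int h * int p = int k - int j] (mod int p)"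
        by (simp add: cong_iff_dvd_diff)
    qed
    then show "[(\<Prod>h<p. int k - int j - int h * int p) = (int k - int j) ^ p] (mod int p)"
      by simp
  qed
  also have "(\<Prod>j\<in>S. (int k - int j) ^ p) = (\<Prod>j\<in>S. int k - int j) ^ p"
    by (simp add: prod_power_distrib)
  also have "[\<dots> = (-1) ^ p] (mod int p)"
    by (rule cong_pow) (use wilson_part[OF assms] in \<open>simp add: S_def\<close>)
  also have "[(-1::int) ^ p = -1] (mod int p)" by (rule neg_one_pow_cong[OF assms(1)])
  finally have c: "[poly Q (int k) = -1] (mod int p)" .
  define r where "r = poly (Q + 1) (int k)"
  have "int p dvd r" unfolding r_def using c
    by (simp add: cong_def) (metis cong_iff_dvd_diff cong_def diff_minus_eq_add)
  then obtain t where t: "r = int p * t" by blast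
  have "poly (Q + 1 - [:r:]) (int k) = 0" by (simp add: r_def)
  then have "?Y dvd (Q + 1 - [:r:])" by (simp only: poly_eq_0_iff_dvd)
  then obtain u where u: "Q + 1 - [:r:] = ?Y * u" by (elim dvdE)
  have Q1: "Q + 1 = ?Y * u + Polynomial.smult (int p) [:t:]"
  proof -
    have a: "Q + 1 = ?Y * u + [:r:]" using u by (metis diff_add_cancel)
    have b: "[:r:] = Polynomial.smult (int p) [:t:]" using t by simp
    show ?thesis using a unfolding b .
  qed
  have eq: "(\<Prod>j<p. F j) - - F k = ?Y * (F k * u) + Polynomial.smult (int p) (F k * [:t:])"
    unfolding split using Q1
    by (metis (no_types, lifting) add.commute distrib_left mult.left_commute mult.right_neutral Polynomial.mult_smult_right diff_minus_eq_add)
  have geq: "(\<Prod>j<p. pcompose (G p) [:- int j, 1:]) - (- pcompose (G p) [:- int k, 1:])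
      = (\<Prod>j<p. F j) - - F k" by (simp add: F_def)
  show ?thesis unfolding geq eq Suc_eq_plus1[symmetric]
    by (rule iip_suc[OF iip_mult[OF FkI] iip_mult[OF FkI]])
qed

end
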